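(* Let $G$ be a countably infinite graph. (1) $G$ is HM-homogeneous iff it is HI-homogeneous iff it is HB-homogeneous iff it is HA-homogeneous iff $G\cong K_\omega$. (2) $G$ is MI-homogeneous iff it is MA-homogeneous iff $G\cong K_\omega$ or $G\cong I_\omega$.
   Context: All graphs are undirected and loopless; subgraphs are induced. A homomorphism maps adjacent vertices to adjacent vertices; a monomorphism is an injective homomorphism. For $\mathrm{X}\in\{\mathrm{H},\mathrm{M}\}$ an X-morphism is a homomorphism or monomorphism, respectively. For $\mathrm{Y}\in\{\mathrm{I},\mathrm{A},\mathrm{B},\mathrm{M}\}$, a Y-morphism $G\to G$ is, respectively, a self-embedding (injective map preserving adjacency and non-adjacency), an automorphism, a bijective endomorphism, or an injective endomorphism. $G$ is XY-homogeneous if every X-morphism between finite induced subgraphs of $G$ is the restriction of a Y-morphism $G\to G$. $K_\omega$ is the countable complete graph and $I_\omega$ the countable edgeless graph. *)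

theory Defs
  imports Main "HOL-Library.Countable_Set"
begin

text \<open>A graph on vertex type 'a is given by a symmetric irreflexive edge relation E.
  Finite induced subgraphs are given by finite vertex sets.\<close>

datatype xkind = XH | XM
datatype ykind = YI | YA | YB | YM

definition graph_hom_on :: "('a \<Rightarrow> 'a \<Rightarrow> bool) \<Rightarrow> 'a set \<Rightarrow> ('a \<Rightarrow> 'a) \<Rightarrow> bool" where
  "graph_hom_on E A f \<longleftrightarrow> (\<forall>x\<in>A. \<forall>y\<in>A. E x y \<longrightarrow> E (f x) (f y))"

definition x_morphism :: "xkind \<Rightarrow> ('a \<Rightarrow> 'a \<Rightarrow> bool) \<Rightarrow> 'a set \<Rightarrow> ('a \<Rightarrow> 'a) \<Rightarrow> bool" where
  "x_morphism X E A f \<longleftrightarrow>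
     (case X of XH \<Rightarrow> graph_hom_on E A f
              | XM \<Rightarrow> graph_hom_on E A f \<and> inj_on f A)"

definition y_morphism :: "ykind \<Rightarrow> ('a \<Rightarrow> 'a \<Rightarrow> bool) \<Rightarrow> ('a \<Rightarrow> 'a) \<Rightarrow> bool" where
  "y_morphism Y E g \<longleftrightarrow>
     (case Y of
        YI \<Rightarrow> inj g \<and> (\<forall>x y. E x y \<longleftrightarrow> E (g x) (g y))
      | YA \<Rightarrow> bij g \<and> (\<forall>x y. E x y \<longleftrightarrow> E (g x) (g y))
      | YB \<Rightarrow> bij g \<and> (\<forall>x y. E x y \<longrightarrow> E (g x) (g y))
      | YM \<Rightarrow> inj g \<and> (\<forall>x y. E x y \<longrightarrow> E (g x) (g y)))"

definition xy_homogeneous :: "xkind \<Rightarrow> ykind \<Rightarrow> ('a \<Rightarrow> 'a \<Rightarrow> bool) \<Rightarrow> bool" where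
  "xy_homogeneous X Y E \<longleftrightarrow>
     (\<forall>A B f. finite A \<and> finite B \<and> f ` A \<subseteq> B \<and> x_morphism X E A f \<longrightarrow>
        (\<exists>g. y_morphism Y E g \<and> (\<forall>x\<in>A. g x = f x)))"

definition graph_iso :: "('a \<Rightarrow> 'a \<Rightarrow> bool) \<Rightarrow> ('b \<Rightarrow> 'b \<Rightarrow> bool) \<Rightarrow> bool" where
  "graph_iso E E' \<longleftrightarrow> (\<exists>f. bij f \<and> (\<forall>x y. E x y \<longleftrightarrow> E' (f x) (f y)))"

definition K_omega :: "nat \<Rightarrow> nat \<Rightarrow> bool" where
  "K_omega x y \<longleftrightarrow> x \<noteq> y"

definition I_omega :: "nat \<Rightarrow> nat \<Rightarrow> bool" where
  "I_omega x y \<longleftrightarrow> False"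

end

theory Submission
  imports Defs
begin

lemma ext_perm:
  fixes f :: "'a \<Rightarrow> 'a"
  assumes "finite A" "inj_on f A"
  shows "\<exists>g. bij g \<and> (\<forall>x\<in>A. g x = f x)"
proof -
  have c1: "card (f ` A) = card A" using assms card_image by blast
  have fin: "finite (f ` A)" using assms by simp
  have "card (f ` A - A) = card (A - f ` A)"
  proof -
    have "card (f ` A - A) = card (f ` A) - card (f ` A \<inter> A)"
      using fin by (simp add: card_Diff_subset_Int)
    moreover have "card (A - f ` A) = card A - card (A \<inter> f ` A)"
      using assms(1) by (simp add: card_Diff_subset_Int)
    ultimately show ?thesis using c1 by (simp add: Int_commute)
  qed
  then obtain h where h: "bij_betw h (f ` A - A) (A - f ` A)"
    using finite_same_card_bij[OF finite_Diff[OF fin] finite_Diff[OF assms(1)]] by blast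
  define g where "g x = (if x \<in> A then f x else if x \<in> f ` A then h x else x)" for x
  have "inj g"
  proof (rule injI)
    fix x y assume e: "g x = g y"
    have hin: "\<And>z. z \<in> f ` A - A \<Longrightarrow> h z \<in> A - f ` A" using h bij_betwE by blast
    have hinj: "inj_on h (f ` A - A)" using h bij_betw_def by blast
    consider "x \<in> A" | "x \<notin> A" "x \<in> f ` A" | "x \<notin> A" "x \<notin> f ` A" by blast
    then show "x = y"
    proof cases
      case 1
      then have gx: "g x = f x" unfolding g_def by simp
      consider "y \<in> A" | "y \<notin> A" "y \<in> f ` A" | "y \<notin> A" "y \<notin> f ` A" by blast
      then show ?thesis
      proof cases
        case 1 then show ?thesis using e gx \<open>x \<in> A\<close> assms(2) unfolding g_def inj_on_def by simp
      next
        case 2 then have "g y \<in> A - f ` A" using hin unfolding g_def by simp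
        then show ?thesis using e gx \<open>x \<in> A\<close> by (metis DiffD2 imageI)
      next
        case 3 then have "g y = y" unfolding g_def by simp
        then show ?thesis using e gx \<open>x \<in> A\<close> 3 by auto
      qed
    next
      case 2
      then have gx: "g x \<in> A - f ` A" "g x = h x" using hin unfolding g_def by auto
      consider "y \<in> A" | "y \<notin> A" "y \<in> f ` A" | "y \<notin> A" "y \<notin> f ` A" by blast
      then show ?thesis
      proof cases
        case 1 then have "g y = f y" unfolding g_def by simp
        then show ?thesis using e gx 1 by auto
      next
        case 3 then have "g y = y" unfolding g_def by simp
        then show ?thesis using e gx 3 by auto
      next
        case 22: 2 then have "g y = h y" unfolding g_def by simp
        then show ?thesis using e gx 2 22 hinj unfolding inj_on_def by auto
      qed
    next
      case 3
      then have gx: "g x = x" unfolding g_def by simp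
      consider "y \<in> A" | "y \<notin> A" "y \<in> f ` A" | "y \<notin> A" "y \<notin> f ` A" by blast
      then show ?thesis
      proof cases
        case 1 then have "g y = f y" unfolding g_def by simp
        then show ?thesis using e gx 1 3 by auto
      next
        case 2 then have "g y \<in> A - f ` A" using hin unfolding g_def by simp
        then show ?thesis using e gx 3 by auto
      next
        case 33: 3 then have "g y = y" unfolding g_def by simp
        then show ?thesis using e gx by auto
      qed
    qed
  qed
  moreover have "surj g"
  proof -
    have "y \<in> range g" for y
    proof (cases "y \<in> f ` A")
      case True then obtain x where "x \<in> A" "y = f x" by auto
      then have "g x = y" unfolding g_def by simp
      then show ?thesis by (metis rangeI)
    next
      case False
      show ?thesis
      proof (cases "y \<in> A")
        case True
        then have "y \<in> A - f ` A" using False by auto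
        then obtain z where "z \<in> f ` A - A" "h z = y" using h
          by (metis bij_betw_imp_surj_on imageE)
        then have "g z = y" unfolding g_def by auto
        then show ?thesis by (metis rangeI)
      next
        case False2: False
        then have "g y = y" using False unfolding g_def by auto
        then show ?thesis by (metis rangeI)
      qed
    qed
    then show ?thesis by auto
  qed
  ultimately have "bij g" unfolding bij_def by blast
  moreover have "\<forall>x\<in>A. g x = f x" unfolding g_def by simp
  ultimately show ?thesis by blast
qed

definition complete_gr :: "('a \<Rightarrow> 'a \<Rightarrow> bool) \<Rightarrow> bool" where
  "complete_gr E \<longleftrightarrow> (\<forall>x y. E x y \<longleftrightarrow> x \<noteq> y)"

lemma hom_mono:
  assumes "xy_homogeneous X Y E" "\<And>g. y_morphism Y E g \<Longrightarrow> y_morphism Y' E g"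
  shows "xy_homogeneous X Y' E"
  unfolding xy_homogeneous_def
proof (intro allI impI)
  fix A B f assume a: "finite A \<and> finite B \<and> f ` A \<subseteq> B \<and> x_morphism X E A f"
  have "\<exists>g. y_morphism Y E g \<and> (\<forall>x\<in>A. g x = f x)"
    using assms(1) a unfolding xy_homogeneous_def by (elim allE[of _ A] allE[of _ B] allE[of _ f]) simp
  then obtain g where "y_morphism Y E g" "\<forall>x\<in>A. g x = f x" by blast
  then show "\<exists>g. y_morphism Y' E g \<and> (\<forall>x\<in>A. g x = f x)" using assms(2) by blast
qed

lemma complete_HA:
  assumes "complete_gr E" shows "xy_homogeneous XH YA E"
  unfolding xy_homogeneous_def
proof (intro allI impI)
  fix A B f assume a: "finite A \<and> finite B \<and> f ` A \<subseteq> B \<and> x_morphism XH E A f"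
  have c: "\<And>x y. E x y \<longleftrightarrow> x \<noteq> y" using assms unfolding complete_gr_def by blast
  have hom: "\<forall>x\<in>A. \<forall>y\<in>A. E x y \<longrightarrow> E (f x) (f y)"
    using a unfolding x_morphism_def graph_hom_on_def by simp
  have "inj_on f A"
  proof (rule inj_onI)
    fix x y assume "x \<in> A" "y \<in> A" "f x = f y"
    show "x = y"
    proof (rule ccontr)
      assume "x \<noteq> y"
      then have "E x y" using c by simp
      then have "E (f x) (f y)" using hom \<open>x \<in> A\<close> \<open>y \<in> A\<close> by blast
      then show False using c \<open>f x = f y\<close> by simp
    qed
  qed
  then obtain g where g: "bij g" "\<forall>x\<in>A. g x = f x" using ext_perm[of A f] a by blast
  have "inj g" using g(1) bij_def by blast
  then have "\<forall>x y. E x y \<longleftrightarrow> E (g x) (g y)" using c by (simp add: inj_eq)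
  then have "y_morphism YA E g" using g(1) unfolding y_morphism_def by simp
  then show "\<exists>g. y_morphism YA E g \<and> (\<forall>x\<in>A. g x = f x)" using g by blast
qed

lemma MA_of:
  assumes "complete_gr E \<or> (\<forall>x y. \<not> E x y)" shows "xy_homogeneous XM YA E"
  unfolding xy_homogeneous_def
proof (intro allI impI)
  fix A B f assume a: "finite A \<and> finite B \<and> f ` A \<subseteq> B \<and> x_morphism XM E A f"
  have "inj_on f A" using a unfolding x_morphism_def by auto
  then obtain g where g: "bij g" "\<forall>x\<in>A. g x = f x" using ext_perm[of A f] a by blast
  have ig: "inj g" using g(1) bij_def by blast
  have "\<forall>x y. E x y \<longleftrightarrow> E (g x) (g y)"
  proof (cases "complete_gr E")
    case True
    then have c: "\<And>x y. E x y \<longleftrightarrow> x \<noteq> y" unfolding complete_gr_def by blast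
    show ?thesis using ig c by (simp add: inj_eq)
  next
    case False
    then show ?thesis using assms by blast
  qed
  then have "y_morphism YA E g" using g(1) unfolding y_morphism_def by simp
  then show "\<exists>g. y_morphism YA E g \<and> (\<forall>x\<in>A. g x = f x)" using g by blast
qed

lemma HM_complete:
  assumes "xy_homogeneous XH YM E" "symp E" "irreflp E"
  shows "complete_gr E"
  unfolding complete_gr_def
proof (intro allI)
  fix x y
  show "E x y \<longleftrightarrow> x \<noteq> y"
  proof
    assume "E x y" then show "x \<noteq> y" using assms(3) by (auto simp: irreflp_def)
  next
    assume ne: "x \<noteq> y"
    show "E x y"
    proof (rule ccontr)
      assume n: "\<not> E x y"
      then have n2: "\<not> E y x" using assms(2) by (auto simp: symp_def)
      have "x_morphism XH E {x, y} (\<lambda>_. x)"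
        unfolding x_morphism_def graph_hom_on_def using n n2 assms(3)
        by (auto simp: irreflp_def)
      then obtain g where "y_morphism YM E g" "\<forall>z\<in>{x,y}. g z = x"
        using assms(1) unfolding xy_homogeneous_def
        by (metis finite.emptyI finite.insertI image_subsetI singletonI)
      then show False using ne unfolding y_morphism_def by (auto dest: injD)
    qed
  qed
qed

lemma MI_ce:
  assumes "xy_homogeneous XM YI E" "symp E" "irreflp E"
  shows "complete_gr E \<or> (\<forall>x y. \<not> E x y)"
proof (rule ccontr)
  assume "\<not> ?thesis"
  then obtain a b c d where ab: "E a b" and cd: "c \<noteq> d" "\<not> E c d"
    unfolding complete_gr_def using assms(3) by (auto simp: irreflp_def)
  have ab': "a \<noteq> b" using ab assms(3) by (auto simp: irreflp_def)
  have dc: "\<not> E d c" using cd assms(2) by (auto simp: symp_def)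
  define f where "f z = (if z = c then a else b)" for z
  have "x_morphism XM E {c, d} f"
    unfolding x_morphism_def graph_hom_on_def f_def using cd dc ab' assms(3)
    by (auto simp: irreflp_def)
  moreover have "f ` {c, d} \<subseteq> f ` {c, d}" by simp
  ultimately have "\<exists>g. y_morphism YI E g \<and> (\<forall>z\<in>{c,d}. g z = f z)"
    using assms(1) unfolding xy_homogeneous_def
    by (elim allE[of _ "{c,d}"] allE[of _ "f ` {c,d}"] allE[of _ f]) simp
  then obtain g where g: "y_morphism YI E g" "\<forall>z\<in>{c,d}. g z = f z" by blast
  then have "g c = a" "g d = b" using cd unfolding f_def by auto
  moreover have "E c d \<longleftrightarrow> E (g c) (g d)" using g(1) unfolding y_morphism_def by simp
  ultimately show False using cd ab by simp
qed

lemma iso_K: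
  assumes "countable (UNIV :: 'a set)" "infinite (UNIV :: 'a set)"
  shows "graph_iso (E :: 'a \<Rightarrow> 'a \<Rightarrow> bool) K_omega \<longleftrightarrow> complete_gr E"
proof
  assume "graph_iso E K_omega"
  then obtain f where "bij f" "\<forall>x y. E x y \<longleftrightarrow> K_omega (f x) (f y)"
    unfolding graph_iso_def by blast
  then show "complete_gr E" unfolding complete_gr_def K_omega_def
    by (auto simp: bij_def inj_eq)
next
  assume c: "complete_gr E"
  obtain e :: "'a \<Rightarrow> nat" where "bij_betw e UNIV UNIV"
    using countableE_infinite assms by blast
  then have "bij e" "inj e" by (auto simp: bij_betw_def)
  moreover have "\<forall>x y. E x y \<longleftrightarrow> K_omega (e x) (e y)"
    using c \<open>inj e\<close> unfolding complete_gr_def K_omega_def by (simp add: inj_eq)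
  ultimately show "graph_iso E K_omega" unfolding graph_iso_def by blast
qed

lemma iso_I:
  assumes "countable (UNIV :: 'a set)" "infinite (UNIV :: 'a set)"
  shows "graph_iso (E :: 'a \<Rightarrow> 'a \<Rightarrow> bool) I_omega \<longleftrightarrow> (\<forall>x y. \<not> E x y)"
proof
  assume "graph_iso E I_omega"
  then show "\<forall>x y. \<not> E x y" unfolding graph_iso_def I_omega_def by blast
next
  assume c: "\<forall>x y. \<not> E x y"
  obtain e :: "'a \<Rightarrow> nat" where "bij_betw e UNIV UNIV"
    using countableE_infinite assms by blast
  then have "bij e" by (auto simp: bij_betw_def)
  moreover have "\<forall>x y. E x y \<longleftrightarrow> I_omega (e x) (e y)" using c unfolding I_omega_def by simp
  ultimately show "graph_iso E I_omega" unfolding graph_iso_def by blast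
qed

theorem theorem3p2:
  fixes E :: "'a \<Rightarrow> 'a \<Rightarrow> bool"
  assumes "countable (UNIV :: 'a set)" and "infinite (UNIV :: 'a set)"
    and "symp E" and "irreflp E"
  shows "(xy_homogeneous XH YM E \<longleftrightarrow> xy_homogeneous XH YI E)
       \<and> (xy_homogeneous XH YI E \<longleftrightarrow> xy_homogeneous XH YB E)
       \<and> (xy_homogeneous XH YB E \<longleftrightarrow> xy_homogeneous XH YA E)
       \<and> (xy_homogeneous XH YA E \<longleftrightarrow> graph_iso E K_omega)
       \<and> (xy_homogeneous XM YI E \<longleftrightarrow> xy_homogeneous XM YA E)
       \<and> (xy_homogeneous XM YA E \<longleftrightarrow> graph_iso E K_omega \<or> graph_iso E I_omega)"
proof -
  have AB: "\<And>X. xy_homogeneous X YA E \<Longrightarrow> xy_homogeneous X YB E"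
    by (erule hom_mono) (auto simp: y_morphism_def)
  have AI: "\<And>X. xy_homogeneous X YA E \<Longrightarrow> xy_homogeneous X YI E"
    by (erule hom_mono) (auto simp: y_morphism_def bij_def)
  have BM: "\<And>X. xy_homogeneous X YB E \<Longrightarrow> xy_homogeneous X YM E"
    by (erule hom_mono) (auto simp: y_morphism_def bij_def)
  have IM: "\<And>X. xy_homogeneous X YI E \<Longrightarrow> xy_homogeneous X YM E"
    by (erule hom_mono) (auto simp: y_morphism_def)
  have M: "xy_homogeneous XH YM E \<Longrightarrow> xy_homogeneous XH YA E"
    using HM_complete complete_HA assms by blast
  have K: "graph_iso E K_omega \<longleftrightarrow> complete_gr E" using iso_K assms by blast
  have I: "graph_iso E I_omega \<longleftrightarrow> (\<forall>x y. \<not> E x y)" using iso_I assms by blast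
  have MI: "xy_homogeneous XM YI E \<Longrightarrow> xy_homogeneous XM YA E"
    using MI_ce MA_of assms by blast
  have H1: "xy_homogeneous XH YM E \<Longrightarrow> complete_gr E"
    using HM_complete assms(3,4) by blast
  have H2: "complete_gr E \<Longrightarrow> xy_homogeneous XH YA E" by (rule complete_HA)
  have HA: "xy_homogeneous XH YA E \<Longrightarrow> xy_homogeneous XH YM E" using AB BM by blast
  have M1: "xy_homogeneous XM YI E \<Longrightarrow> complete_gr E \<or> (\<forall>x y. \<not> E x y)"
    using MI_ce assms(3,4) by blast
  have M2: "xy_homogeneous XM YA E \<Longrightarrow> xy_homogeneous XM YI E" by (rule AI)
  have M3: "complete_gr E \<or> (\<forall>x y. \<not> E x y) \<Longrightarrow> xy_homogeneous XM YA E" by (rule MA_of)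
  have "xy_homogeneous XH YM E \<longleftrightarrow> complete_gr E" using H1 H2 HA by blast
  moreover have "xy_homogeneous XH YI E \<longleftrightarrow> complete_gr E" using H1 H2 AI IM by blast
  moreover have "xy_homogeneous XH YB E \<longleftrightarrow> complete_gr E" using H1 H2 AB BM by blast
  moreover have "xy_homogeneous XH YA E \<longleftrightarrow> complete_gr E" using H1 H2 HA by blast
  moreover have "xy_homogeneous XM YI E \<longleftrightarrow> complete_gr E \<or> (\<forall>x y. \<not> E x y)" using M1 M2 M3 by blast
  moreover have "xy_homogeneous XM YA E \<longleftrightarrow> complete_gr E \<or> (\<forall>x y. \<not> E x y)" using M1 M2 M3 by blast
  ultimately show ?thesis unfolding K I by simp
qed

end
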